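(* For every integer $n\ge 2$, \[ \gamma_{2t}(K_n\Box K_{n+1})=\begin{cases}(3n+2)/2, & n\equiv 0\pmod 2,\\ (3n+3)/2, & n\equiv 1\pmod 2.\end{cases} \]
   Context: For a graph $G=(V,E)$, a set $S\subseteq V$ is a total $2$-dominating set if every vertex of $V$ (including those in $S$) is adjacent to at least $2$ vertices of $S$; $\gamma_{2t}(G)$ is the minimum cardinality of such a set. $G\Box H$ denotes the Cartesian product: vertex set $V(G)\times V(H)$, with $(u_1,v_1)\sim(u_2,v_2)$ iff either $u_1=u_2$ and $v_1\sim v_2$, or $v_1=v_2$ and $u_1\sim u_2$. $K_n$ is the complete graph on $n$ vertices. *)

theory Defs
  imports Main
begin

definition total_k_dominating :: "nat \<Rightarrow> 'a set \<Rightarrow> ('a \<Rightarrow> 'a \<Rightarrow> bool) \<Rightarrow> 'a set \<Rightarrow> bool" where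
  "total_k_dominating k V adj S \<longleftrightarrow>
     S \<subseteq> V \<and> (\<forall>v\<in>V. k \<le> card {u\<in>S. adj v u})"

definition gamma_kt :: "nat \<Rightarrow> 'a set \<Rightarrow> ('a \<Rightarrow> 'a \<Rightarrow> bool) \<Rightarrow> nat" where
  "gamma_kt k V adj = (LEAST c. \<exists>S. finite S \<and> total_k_dominating k V adj S \<and> card S = c)"

definition K_verts :: "nat \<Rightarrow> nat set" where
  "K_verts n = {0..<n}"

definition K_adj :: "nat \<Rightarrow> nat \<Rightarrow> bool" where
  "K_adj u v \<longleftrightarrow> u \<noteq> v"

definition cart_verts :: "'a set \<Rightarrow> 'b set \<Rightarrow> ('a \<times> 'b) set" where
  "cart_verts V W = V \<times> W"

definition cart_adj :: "('a \<Rightarrow> 'a \<Rightarrow> bool) \<Rightarrow> ('b \<Rightarrow> 'b \<Rightarrow> bool) \<Rightarrow> 'a \<times> 'b \<Rightarrow> 'a \<times> 'b \<Rightarrow> bool" where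
  "cart_adj adjG adjH p q \<longleftrightarrow>
     (fst p = fst q \<and> adjH (snd p) (snd q)) \<or> (snd p = snd q \<and> adjG (fst p) (fst q))"

end

theory Submission imports Defs Complex_Main begin

definition RR :: "('a\<times>'b) set \<Rightarrow> 'a \<Rightarrow> ('a\<times>'b) set" where
  "RR S i = {u. u\<in>S \<and> fst u = i}"
definition CC :: "('a\<times>'b) set \<Rightarrow> 'b \<Rightarrow> ('a\<times>'b) set" where
  "CC S j = {u. u\<in>S \<and> snd u = j}"

lemma adj_eq:
  "{u\<in>S. cart_adj K_adj K_adj v u} = (RR S (fst v) - {v}) \<union> (CC S (snd v) - {v})"
  unfolding RR_def CC_def cart_adj_def K_adj_def by (auto simp: prod_eq_iff)

lemma adj_card:
  assumes "finite S"
  shows "card {u\<in>S. cart_adj K_adj K_adj v u} = card (RR S (fst v) - {v}) + card (CC S (snd v) - {v})"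
proof -
  have "(RR S (fst v) - {v}) \<inter> (CC S (snd v) - {v}) = {}"
    unfolding RR_def CC_def by (auto simp: prod_eq_iff)
  moreover have "finite (RR S (fst v))" "finite (CC S (snd v))" using assms unfolding RR_def CC_def by auto
  ultimately show ?thesis unfolding adj_eq by (simp add: card_Un_disjoint)
qed

lemma verts: "cart_verts (K_verts n) (K_verts (n+1)) = {0..<n} \<times> {0..<n+1}"
  unfolding cart_verts_def K_verts_def by simp

lemma frac_bound:
  fixes r c :: nat
  assumes "r \<ge> 1" "c \<ge> 1" "r + c \<ge> 4"
  shows "1 / real r + 1 / real c \<le> 4/3"
proof -
  consider "r = 1" | "r = 2" | "r \<ge> 3" using assms by linarith
  then show ?thesis
  proof cases
    case 1
    then have "c \<ge> 3" using assms by simp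
    then have "1 / real c \<le> 1/(3::real)" by (simp add: field_simps)
    then show ?thesis using 1 by simp
  next
    case 2
    then have "c \<ge> 2" using assms by simp
    then have "1 / real c \<le> 1/(2::real)" by (simp add: field_simps)
    then show ?thesis using 2 by simp
  next
    case 3
    then have "1 / real r \<le> 1/(3::real)" by (simp add: field_simps)
    moreover have "1 / real c \<le> 1" using assms by (simp add: field_simps)
    ultimately show ?thesis by simp
  qed
qed

lemma card_rows:
  assumes "finite S" "S \<subseteq> A \<times> B" "finite A"
  shows "card S = (\<Sum>i\<in>A. card (RR S i))"
proof -
  have "(\<Sum>i\<in>A. \<Sum>x\<in>{x. x\<in>S \<and> fst x = i}. (1::nat)) = (\<Sum>x\<in>S. 1)"
    by (rule sum.group) (use assms in auto)
  then show ?thesis unfolding RR_def by simp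
qed

lemma card_cols:
  assumes "finite S" "S \<subseteq> A \<times> B" "finite B"
  shows "card S = (\<Sum>j\<in>B. card (CC S j))"
proof -
  have "(\<Sum>j\<in>B. \<Sum>x\<in>{x. x\<in>S \<and> snd x = j}. (1::nat)) = (\<Sum>x\<in>S. 1)"
    by (rule sum.group) (use assms in auto)
  then show ?thesis unfolding CC_def by simp
qed

lemma inv_rows:
  assumes "finite S" "S \<subseteq> A \<times> B" "finite A" "\<forall>i\<in>A. RR S i \<noteq> {}"
  shows "(\<Sum>v\<in>S. 1 / real (card (RR S (fst v)))) = real (card A)"
proof -
  have "(\<Sum>i\<in>A. \<Sum>x\<in>{x. x\<in>S \<and> fst x = i}. 1 / real (card (RR S (fst x)))) = (\<Sum>x\<in>S. 1 / real (card (RR S (fst x))))"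
    by (rule sum.group) (use assms in auto)
  moreover have h: "(\<Sum>x\<in>{x. x\<in>S \<and> fst x = i}. 1 / real (card (RR S (fst x)))) = 1" if "i \<in> A" for i
  proof -
    have "(\<Sum>x\<in>{x. x\<in>S \<and> fst x = i}. 1 / real (card (RR S (fst x)))) = (\<Sum>x\<in>RR S i. 1 / real (card (RR S i)))"
      unfolding RR_def by (rule sum.cong) auto
    also have "\<dots> = 1"
    proof -
      have "finite (RR S i)" using assms(1) unfolding RR_def by auto
      then have "card (RR S i) > 0" using assms(4) that by (simp add: card_gt_0_iff)
      then show ?thesis by (simp add: sum_constant)
    qed
    finally show ?thesis .
  qed
  ultimately have g: "(\<Sum>i\<in>A. \<Sum>x\<in>{x. x\<in>S \<and> fst x = i}. 1 / real (card (RR S (fst x)))) = (\<Sum>x\<in>S. 1 / real (card (RR S (fst x))))" and hh: "\<And>i. i\<in>A \<Longrightarrow> (\<Sum>x\<in>{x. x\<in>S \<and> fst x = i}. 1 / real (card (RR S (fst x)))) = 1" by blast+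
  have "(\<Sum>i\<in>A. \<Sum>x\<in>{x. x\<in>S \<and> fst x = i}. 1 / real (card (RR S (fst x)))) = (\<Sum>i\<in>A. (1::real))"
    by (rule sum.cong[OF refl]) (rule hh)
  with g show ?thesis by simp
qed

lemma inv_cols:
  assumes "finite S" "S \<subseteq> A \<times> B" "finite B" "\<forall>j\<in>B. CC S j \<noteq> {}"
  shows "(\<Sum>v\<in>S. 1 / real (card (CC S (snd v)))) = real (card B)"
proof -
  have "(\<Sum>i\<in>B. \<Sum>x\<in>{x. x\<in>S \<and> snd x = i}. 1 / real (card (CC S (snd x)))) = (\<Sum>x\<in>S. 1 / real (card (CC S (snd x))))"
    by (rule sum.group) (use assms in auto)
  moreover have h: "(\<Sum>x\<in>{x. x\<in>S \<and> snd x = i}. 1 / real (card (CC S (snd x)))) = 1" if "i \<in> B" for i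
  proof -
    have "(\<Sum>x\<in>{x. x\<in>S \<and> snd x = i}. 1 / real (card (CC S (snd x)))) = (\<Sum>x\<in>CC S i. 1 / real (card (CC S i)))"
      unfolding CC_def by (rule sum.cong) auto
    also have "\<dots> = 1"
    proof -
      have "finite (CC S i)" using assms(1) unfolding CC_def by auto
      then have "card (CC S i) > 0" using assms(4) that by (simp add: card_gt_0_iff)
      then show ?thesis by (simp add: sum_constant)
    qed
    finally show ?thesis .
  qed
  ultimately have g: "(\<Sum>i\<in>B. \<Sum>x\<in>{x. x\<in>S \<and> snd x = i}. 1 / real (card (CC S (snd x)))) = (\<Sum>x\<in>S. 1 / real (card (CC S (snd x))))" and hh: "\<And>i. i\<in>B \<Longrightarrow> (\<Sum>x\<in>{x. x\<in>S \<and> snd x = i}. 1 / real (card (CC S (snd x)))) = 1" by blast+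
  have "(\<Sum>i\<in>B. \<Sum>x\<in>{x. x\<in>S \<and> snd x = i}. 1 / real (card (CC S (snd x)))) = (\<Sum>i\<in>B. (1::real))"
    by (rule sum.cong[OF refl]) (rule hh)
  with g show ?thesis by simp
qed

lemma RR_set: "RR (set L) i = set (filter (\<lambda>u. fst u = i) L)" unfolding RR_def by auto
lemma CC_set: "CC (set L) i = set (filter (\<lambda>u. snd u = i) L)" unfolding CC_def by auto

lemma lower:
  assumes n: "n \<ge> 2" and fin: "finite S"
    and tkd: "total_k_dominating 2 ({0..<n} \<times> {0..<n+1}) (cart_adj K_adj K_adj) S"
  shows "3*n+2 \<le> 2 * card S"
proof -
  let ?A = "{0..<n}" and ?B = "{0..<n+1}"
  have sub: "S \<subseteq> ?A \<times> ?B" and dom: "\<forall>v\<in>?A\<times>?B. 2 \<le> card {u\<in>S. cart_adj K_adj K_adj v u}"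
    using tkd unfolding total_k_dominating_def by auto
  have dom2: "2 \<le> card (RR S i - {(i,j)}) + card (CC S j - {(i,j)})" if "i<n" "j<n+1" for i j
  proof -
    have "(i,j) \<in> ?A\<times>?B" using that by auto
    with dom have "2 \<le> card {u\<in>S. cart_adj K_adj K_adj (i,j) u}" by blast
    then show ?thesis using adj_card[OF fin, of "(i,j)"] by simp
  qed
  have finR: "finite (RR S i)" for i using fin unfolding RR_def by auto
  have finC: "finite (CC S i)" for i using fin unfolding CC_def by auto
  have cR: "card S = (\<Sum>i\<in>?A. card (RR S i))" by (rule card_rows[OF fin sub]) simp
  have cC: "card S = (\<Sum>j\<in>?B. card (CC S j))" by (rule card_cols[OF fin sub]) simp
  show ?thesis
  proof (cases "\<exists>i<n. RR S i = {}")
    case True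
    then obtain i where i: "i<n" "RR S i = {}" by blast
    have "2 \<le> card (CC S j)" if "j \<in> ?B" for j
    proof -
      have "card (CC S j - {(i,j)}) \<le> card (CC S j)" by (rule card_Diff1_le)
      with dom2[of i j] i that show ?thesis by simp
    qed
    then have "(\<Sum>j\<in>?B. 2) \<le> (\<Sum>j\<in>?B. card (CC S j))" by (rule sum_mono)
    then have "2*(n+1) \<le> card S" using cC by simp
    then show ?thesis by simp
  next
    case False
    then have Rne: "\<forall>i\<in>?A. RR S i \<noteq> {}" by auto
    show ?thesis
    proof (cases "\<exists>j<n+1. CC S j = {}")
      case True
      then obtain j where j: "j<n+1" "CC S j = {}" by blast
      have "2 \<le> card (RR S i)" if "i \<in> ?A" for i
      proof -
        have "card (RR S i - {(i,j)}) \<le> card (RR S i)" by (rule card_Diff1_le)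
        with dom2[of i j] j that show ?thesis by simp
      qed
      then have "(\<Sum>i\<in>?A. 2) \<le> (\<Sum>i\<in>?A. card (RR S i))" by (rule sum_mono)
      then have "2*n \<le> card S" using cR by simp
      then show ?thesis using n by simp
    next
      case False
      then have Cne: "\<forall>j\<in>?B. CC S j \<noteq> {}" by auto
      have key: "1 / real (card (RR S (fst v))) + 1 / real (card (CC S (snd v))) \<le> 4/3" if "v\<in>S" for v
      proof -
        obtain i j where v: "v=(i,j)" by (cases v)
        have ij: "i<n" "j<n+1" using sub that v by auto
        have vR: "v \<in> RR S i" and vC: "v \<in> CC S j" using that v unfolding RR_def CC_def by auto
        then have r1: "card (RR S i) \<ge> 1" "card (CC S j) \<ge> 1"
          using finR finC by (auto simp: Suc_le_eq card_gt_0_iff)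
        have "card (RR S i - {v}) = card (RR S i) - 1" "card (CC S j - {v}) = card (CC S j) - 1"
          using vR vC finR finC by simp_all
        then have "card (RR S i) + card (CC S j) \<ge> 4" using dom2[OF ij] v r1 by simp
        then show ?thesis using frac_bound r1 v by simp
      qed
      have "(\<Sum>v\<in>S. 1 / real (card (RR S (fst v))) + 1 / real (card (CC S (snd v)))) = real n + real (n+1)"
        using inv_rows[OF fin sub _ Rne] inv_cols[OF fin sub _ Cne] by (simp add: sum.distrib)
      moreover have "(\<Sum>v\<in>S. 1 / real (card (RR S (fst v))) + 1 / real (card (CC S (snd v)))) \<le> (\<Sum>v\<in>S. 4/3)"
        by (rule sum_mono) (rule key)
      ultimately have "real n + real (n+1) \<le> 4/3 * real (card S)" by simp
      then have "real (6*n+3) \<le> real (4*card S)" by simp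
      then have "6*n+3 \<le> 4*card S" by (simp only: of_nat_le_iff)
      then show ?thesis by presburger
    qed
  qed
qed

lemma valid_of:
  assumes fin: "finite S" and sub: "S \<subseteq> A \<times> B" and Rne: "\<forall>i\<in>A. RR S i \<noteq> {}"
    and Cne: "\<forall>j\<in>B. CC S j \<noteq> {}"
    and deg: "\<forall>v\<in>S. 4 \<le> card (RR S (fst v)) + card (CC S (snd v))"
  shows "total_k_dominating 2 (A \<times> B) (cart_adj K_adj K_adj) S"
  unfolding total_k_dominating_def
proof (intro conjI ballI)
  show "S \<subseteq> A \<times> B" by fact
  fix v assume v: "v \<in> A \<times> B"
  obtain i j where vij: "v=(i,j)" by (cases v)
  have finR: "finite (RR S i)" using fin unfolding RR_def by auto
  have finC: "finite (CC S j)" using fin unfolding CC_def by auto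
  have r1: "card (RR S i) \<ge> 1" using Rne v vij finR by (auto simp: Suc_le_eq card_gt_0_iff)
  have c1: "card (CC S j) \<ge> 1" using Cne v vij finC by (auto simp: Suc_le_eq card_gt_0_iff)
  show "2 \<le> card {u\<in>S. cart_adj K_adj K_adj v u}"
  proof (cases "v \<in> S")
    case True
    then have "v \<in> RR S i" "v \<in> CC S j" unfolding RR_def CC_def using vij by auto
    then have e: "card (RR S i - {v}) = card (RR S i) - 1" "card (CC S j - {v}) = card (CC S j) - 1"
      using finR finC by simp_all
    have "4 \<le> card (RR S i) + card (CC S j)" using deg True vij by auto
    then show ?thesis using adj_card[OF fin, of v] e vij by simp
  next
    case False
    then have "RR S i - {v} = RR S i" "CC S j - {v} = CC S j" unfolding RR_def CC_def by auto
    then show ?thesis using r1 c1 adj_card[OF fin, of v] vij by simp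
  qed
qed

definition P44 :: "(nat\<times>nat) set" where "P44 = {(0,1),(0,2),(0,3),(1,0),(2,0),(3,0)}"
definition blk :: "nat \<Rightarrow> (nat\<times>nat) set" where
  "blk m = (\<lambda>(t,a,b). (4*t+a, 4*t+b)) ` ({..<m} \<times> P44)"
definition tl0 :: "nat \<Rightarrow> (nat\<times>nat) set \<Rightarrow> (nat\<times>nat) set" where
  "tl0 m T = (\<lambda>(a,b). (4*m+a, 4*m+b)) ` T"

lemma build:
  fixes T :: "(nat\<times>nat) set"
  assumes finT: "finite T" and subT: "T \<subseteq> {..<p} \<times> {..<q}"
    and RT: "\<forall>i<p. RR T i \<noteq> {}" and CT: "\<forall>j<q. CC T j \<noteq> {}"
    and degT: "\<forall>v\<in>T. 4 \<le> card (RR T (fst v)) + card (CC T (snd v))"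
  shows "\<exists>S. finite S \<and> total_k_dominating 2 ({0..<4*m+p} \<times> {0..<4*m+q}) (cart_adj K_adj K_adj) S
            \<and> card S \<le> 6*m + card T"
proof -
  define S where "S = blk m \<union> tl0 m T"
  have finP: "finite P44" and cP: "card P44 = 6" unfolding P44_def by auto
  have fin: "finite S" unfolding S_def blk_def tl0_def using finT finP by auto
  have finR: "finite (RR S i)" for i using fin unfolding RR_def by auto
  have finC: "finite (CC S i)" for i using fin unfolding CC_def by auto
  have c1: "card S \<le> card (blk m) + card (tl0 m T)" unfolding S_def by (rule card_Un_le)
  have c2: "card (blk m) \<le> card ({..<m} \<times> P44)" unfolding blk_def
    by (rule card_image_le) (use finP in auto)
  have c3: "card (tl0 m T) \<le> card T" unfolding tl0_def by (rule card_image_le[OF finT])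
  have card: "card S \<le> 6*m + card T" using c1 c2 c3 cP by (simp add: card_cartesian_product)
  have memB: "(4*t+a, 4*t+b) \<in> S" if "t<m" "(a,b) \<in> P44" for t a b
    unfolding S_def blk_def by (rule UnI1, rule image_eqI[where x="(t,a,b)"]) (use that in auto)
  have memT: "(4*m+a, 4*m+b) \<in> S" if "(a,b)\<in>T" for a b
    unfolding S_def tl0_def by (rule UnI2, rule image_eqI[where x="(a,b)"]) (use that in auto)
  have sub: "S \<subseteq> {0..<4*m+p} \<times> {0..<4*m+q}"
  proof
    fix x assume "x\<in>S"
    then consider (b) t a b where "t<m" "(a,b)\<in>P44" "x=(4*t+a,4*t+b)"
      | (t) a b where "(a,b)\<in>T" "x=(4*m+a,4*m+b)" unfolding S_def blk_def tl0_def by auto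
    then show "x \<in> {0..<4*m+p} \<times> {0..<4*m+q}"
    proof cases
      case b
      then have "a \<le> 3" "b \<le> 3" unfolding P44_def by auto
      moreover have "4*t+3 < 4*m" using b by linarith
      ultimately show ?thesis using b by auto
    next
      case t
      then show ?thesis using subT by auto
    qed
  qed
  have Rne: "\<forall>i\<in>{0..<4*m+p}. RR S i \<noteq> {}"
  proof
    fix i assume i: "i \<in> {0..<4*m+p}"
    show "RR S i \<noteq> {}"
    proof (cases "i < 4*m")
      case True
      define t where "t = i div 4"
      define a where "a = i mod 4"
      have ti: "i = 4*t+a" "t<m" "a<4" using True unfolding t_def a_def by auto
      show ?thesis
      proof (cases "a=0")
        case True
        then have "(0,1)\<in>P44" unfolding P44_def by simp
        then have "(4*t+0, 4*t+1) \<in> S" using memB ti by blast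
        then show ?thesis unfolding RR_def using ti True by auto
      next
        case False
        then have "(a,0)\<in>P44" unfolding P44_def using ti by auto
        then have "(4*t+a, 4*t+0) \<in> S" using memB ti by blast
        then show ?thesis unfolding RR_def using ti by auto
      qed
    next
      case False
      then obtain a where a: "i = 4*m+a" "a<p" using i by (metis add_diff_inverse_nat atLeastLessThan_iff nat_add_left_cancel_less)
      then obtain u where "u \<in> RR T a" using RT by blast
      then obtain b where "(a,b)\<in>T" unfolding RR_def by (cases u) auto
      then have "(4*m+a, 4*m+b) \<in> S" by (rule memT)
      then show ?thesis unfolding RR_def using a by auto
    qed
  qed
  have Cne: "\<forall>j\<in>{0..<4*m+q}. CC S j \<noteq> {}"
  proof
    fix i assume i: "i \<in> {0..<4*m+q}"
    show "CC S i \<noteq> {}"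
    proof (cases "i < 4*m")
      case True
      define t where "t = i div 4"
      define a where "a = i mod 4"
      have ti: "i = 4*t+a" "t<m" "a<4" using True unfolding t_def a_def by auto
      show ?thesis
      proof (cases "a=0")
        case True
        then have "(1,0)\<in>P44" unfolding P44_def by simp
        then have "(4*t+1, 4*t+0) \<in> S" using memB ti by blast
        then show ?thesis unfolding CC_def using ti True by auto
      next
        case False
        then have "(0,a)\<in>P44" unfolding P44_def using ti by auto
        then have "(4*t+0, 4*t+a) \<in> S" using memB ti by blast
        then show ?thesis unfolding CC_def using ti by auto
      qed
    next
      case False
      then obtain a where a: "i = 4*m+a" "a<q" using i by (metis add_diff_inverse_nat atLeastLessThan_iff nat_add_left_cancel_less)
      then obtain u where "u \<in> CC T a" using CT by blast
      then obtain b where "(b,a)\<in>T" unfolding CC_def by (cases u) auto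
      then have "(4*m+b, 4*m+a) \<in> S" by (rule memT)
      then show ?thesis unfolding CC_def using a by auto
    qed
  qed
  have deg: "\<forall>v\<in>S. 4 \<le> card (RR S (fst v)) + card (CC S (snd v))"
  proof
    fix x assume "x\<in>S"
    then consider (b) t a b where "t<m" "(a,b)\<in>P44" "x=(4*t+a,4*t+b)"
      | (t) a b where "(a,b)\<in>T" "x=(4*m+a,4*m+b)" unfolding S_def blk_def tl0_def by auto
    then show "4 \<le> card (RR S (fst x)) + card (CC S (snd x))"
    proof cases
      case b
      then have "(a=0 \<and> b\<in>{1,2,3}) \<or> (b=0 \<and> a\<in>{1,2,3})" unfolding P44_def by auto
      then show ?thesis
      proof
        assume ab: "a=0 \<and> b\<in>{1,2,3}"
        have "(0,1)\<in>P44" "(0,2)\<in>P44" "(0,3)\<in>P44" unfolding P44_def by auto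
        then have "(4*t+0,4*t+1) \<in> S" "(4*t+0,4*t+2) \<in> S" "(4*t+0,4*t+3) \<in> S"
          using memB[OF b(1)] by blast+
        then have "{(4*t,4*t+1),(4*t,4*t+2),(4*t,4*t+3)} \<subseteq> RR S (fst x)"
          using b ab unfolding RR_def by auto
        then have "card {(4*t,4*t+1),(4*t,4*t+2),(4*t,4*t+3)} \<le> card (RR S (fst x))"
          using finR by (rule card_mono[rotated])
        then have "3 \<le> card (RR S (fst x))" by simp
        moreover have "x \<in> CC S (snd x)" using \<open>x\<in>S\<close> unfolding CC_def by auto
        then have "1 \<le> card (CC S (snd x))" using finC by (auto simp: Suc_le_eq card_gt_0_iff)
        ultimately show ?thesis by simp
      next
        assume ab: "b=0 \<and> a\<in>{1,2,3}"
        have "(1,0)\<in>P44" "(2,0)\<in>P44" "(3,0)\<in>P44" unfolding P44_def by auto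
        then have "(4*t+1,4*t+0) \<in> S" "(4*t+2,4*t+0) \<in> S" "(4*t+3,4*t+0) \<in> S"
          using memB[OF b(1)] by blast+
        then have "{(4*t+1,4*t),(4*t+2,4*t),(4*t+3,4*t)} \<subseteq> CC S (snd x)"
          using b ab unfolding CC_def by auto
        then have "card {(4*t+1,4*t),(4*t+2,4*t),(4*t+3,4*t)} \<le> card (CC S (snd x))"
          using finC by (rule card_mono[rotated])
        then have "3 \<le> card (CC S (snd x))" by simp
        moreover have "x \<in> RR S (fst x)" using \<open>x\<in>S\<close> unfolding RR_def by auto
        then have "1 \<le> card (RR S (fst x))" using finR by (auto simp: Suc_le_eq card_gt_0_iff)
        ultimately show ?thesis by simp
      qed
    next
      case t
      let ?f = "\<lambda>(a,b). (4*m+a, 4*m+b)"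
      have inj: "inj ?f" by (auto simp: inj_def)
      have "?f ` RR T a \<subseteq> RR S (fst x)" using memT t unfolding RR_def by auto
      then have "card (?f ` RR T a) \<le> card (RR S (fst x))" using finR by (rule card_mono[rotated])
      moreover have "card (?f ` RR T a) = card (RR T a)" by (rule card_image) (use inj in \<open>auto simp: inj_on_def\<close>)
      moreover have "?f ` CC T b \<subseteq> CC S (snd x)" using memT t unfolding CC_def by auto
      then have "card (?f ` CC T b) \<le> card (CC S (snd x))" using finC by (rule card_mono[rotated])
      moreover have "card (?f ` CC T b) = card (CC T b)" by (rule card_image) (use inj in \<open>auto simp: inj_on_def\<close>)
      moreover have "4 \<le> card (RR T a) + card (CC T b)" using degT t by auto
      ultimately show ?thesis by linarith
    qed
  qed
  have "total_k_dominating 2 ({0..<4*m+p} \<times> {0..<4*m+q}) (cart_adj K_adj K_adj) S"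
    by (rule valid_of[OF fin sub Rne Cne deg])
  then show ?thesis using fin card by blast
qed

lemma build_list:
  fixes L :: "(nat\<times>nat) list"
  assumes subT: "set L \<subseteq> {..<p} \<times> {..<q}"
    and RT: "\<forall>i<p. set (filter (\<lambda>u. fst u = i) L) \<noteq> {}"
    and CT: "\<forall>j<q. set (filter (\<lambda>u. snd u = j) L) \<noteq> {}"
    and degT: "\<forall>v\<in>set L. 4 \<le> card (set (filter (\<lambda>u. fst u = fst v) L)) + card (set (filter (\<lambda>u. snd u = snd v) L))"
  shows "\<exists>S. finite S \<and> total_k_dominating 2 ({0..<4*m+p} \<times> {0..<4*m+q}) (cart_adj K_adj K_adj) S
            \<and> card S \<le> 6*m + card (set L)"
  by (rule build) (use assms in \<open>simp_all add: RR_set CC_set\<close>)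

definition "L45 = [(0::nat,0::nat),(0,1),(0,2),(0,3),(1,4),(2,4),(3,4)]"
definition "L34 = [(0::nat,0::nat),(0,1),(0,2),(0,3),(1,0),(2,0)]"
definition "L56 = [(0::nat,0::nat),(0,1),(0,2),(0,3),(0,4),(1,5),(2,5),(3,5),(4,5)]"
definition "L67 = [(0::nat,1::nat),(0,2),(0,3),(1,4),(1,5),(1,6),(2,0),(3,0),(4,0),(5,0)]"

lemma g45: "\<exists>S. finite S \<and> total_k_dominating 2 ({0..<4*m+4} \<times> {0..<4*m+5}) (cart_adj K_adj K_adj) S \<and> card S \<le> 6*m + 7"
proof -
  have "\<exists>S. finite S \<and> total_k_dominating 2 ({0..<4*m+4} \<times> {0..<4*m+5}) (cart_adj K_adj K_adj) S \<and> card S \<le> 6*m + card (set L45)"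
    by (rule build_list) (unfold L45_def, auto simp: less_Suc_eq numeral_eq_Suc)
  moreover have "card (set L45) = 7" by (simp add: L45_def)
  ultimately show ?thesis by simp
qed

lemma g34: "\<exists>S. finite S \<and> total_k_dominating 2 ({0..<4*m+3} \<times> {0..<4*m+4}) (cart_adj K_adj K_adj) S \<and> card S \<le> 6*m + 6"
proof -
  have "\<exists>S. finite S \<and> total_k_dominating 2 ({0..<4*m+3} \<times> {0..<4*m+4}) (cart_adj K_adj K_adj) S \<and> card S \<le> 6*m + card (set L34)"
    by (rule build_list) (unfold L34_def, auto simp: less_Suc_eq numeral_eq_Suc)
  moreover have "card (set L34) = 6" by (simp add: L34_def)
  ultimately show ?thesis by simp
qed

lemma g56: "\<exists>S. finite S \<and> total_k_dominating 2 ({0..<4*m+5} \<times> {0..<4*m+6}) (cart_adj K_adj K_adj) S \<and> card S \<le> 6*m + 9"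
proof -
  have "\<exists>S. finite S \<and> total_k_dominating 2 ({0..<4*m+5} \<times> {0..<4*m+6}) (cart_adj K_adj K_adj) S \<and> card S \<le> 6*m + card (set L56)"
    by (rule build_list) (unfold L56_def, auto simp: less_Suc_eq numeral_eq_Suc)
  moreover have "card (set L56) = 9" by (simp add: L56_def)
  ultimately show ?thesis by simp
qed

lemma g67: "\<exists>S. finite S \<and> total_k_dominating 2 ({0..<4*m+6} \<times> {0..<4*m+7}) (cart_adj K_adj K_adj) S \<and> card S \<le> 6*m + 10"
proof -
  have "\<exists>S. finite S \<and> total_k_dominating 2 ({0..<4*m+6} \<times> {0..<4*m+7}) (cart_adj K_adj K_adj) S \<and> card S \<le> 6*m + card (set L67)"
    by (rule build_list) (unfold L67_def, auto simp: less_Suc_eq numeral_eq_Suc)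
  moreover have "card (set L67) = 10" by (simp add: L67_def)
  ultimately show ?thesis by simp
qed

lemma g2: "\<exists>S. finite S \<and> total_k_dominating 2 ({0..<2} \<times> {0..<3}) (cart_adj K_adj K_adj) S \<and> card S \<le> 4"
proof -
  let ?L = "[(0::nat,0::nat),(0,1),(1,0),(1,1)]"
  have V: "{0..<2} \<times> {0..<3} = {(0::nat,0::nat),(0,1),(0,2),(1,0),(1,1),(1,2)}" by auto
  have "total_k_dominating 2 ({0..<2} \<times> {0..<3}) (cart_adj K_adj K_adj) (set ?L)"
    unfolding total_k_dominating_def adj_card[OF finite_set] RR_set CC_set V by auto
  moreover have "card (set ?L) = 4" by simp
  ultimately show ?thesis by (metis finite_set order_refl)
qed

lemma exists_upper:
  assumes "n \<ge> 2"
  shows "\<exists>S. finite S \<and> total_k_dominating 2 ({0..<n} \<times> {0..<n+1}) (cart_adj K_adj K_adj) S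
            \<and> 2 * card S \<le> 3*n+3"
proof -
  have "n mod 4 = 0 \<or> n mod 4 = 1 \<or> (n mod 4 = 2 \<and> n = 2) \<or> (n mod 4 = 2 \<and> n \<ge> 6) \<or> n mod 4 = 3"
    using assms by presburger
  then consider "n mod 4 = 0" | "n mod 4 = 1" | "n mod 4 = 2 \<and> n = 2" | "n mod 4 = 2 \<and> n \<ge> 6" | "n mod 4 = 3"
    by argo
  then show ?thesis
  proof cases
    case 1
    define m where "m = n div 4 - 1"
    have n: "n = 4*m+4" "n+1 = 4*m+5" using 1 assms unfolding m_def by presburger+
    from g45[of m] obtain S where "finite S" "total_k_dominating 2 ({0..<4*m+4} \<times> {0..<4*m+5}) (cart_adj K_adj K_adj) S" "card S \<le> 6*m+7" by blast
    then show ?thesis unfolding n(2) unfolding n(1) by (intro exI[of _ S] conjI; (assumption | simp))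
  next
    case 2
    define m where "m = (n - 5) div 4"
    have n: "n = 4*m+5" "n+1 = 4*m+6" using 2 assms unfolding m_def by presburger+
    from g56[of m] obtain S where "finite S" "total_k_dominating 2 ({0..<4*m+5} \<times> {0..<4*m+6}) (cart_adj K_adj K_adj) S" "card S \<le> 6*m+9" by blast
    then show ?thesis unfolding n(2) unfolding n(1) by (intro exI[of _ S] conjI; (assumption | simp))
  next
    case 3
    then have n: "n = 2" "n+1 = 3" by simp_all
    from g2 obtain S where "finite S" "total_k_dominating 2 ({0..<2} \<times> {0..<3}) (cart_adj K_adj K_adj) S" "card S \<le> 4" by blast
    then show ?thesis unfolding n(2) unfolding n(1) by (intro exI[of _ S] conjI; (assumption | simp))
  next
    case 4
    define m where "m = (n - 6) div 4"
    have n: "n = 4*m+6" "n+1 = 4*m+7" using 4 assms unfolding m_def by presburger+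
    from g67[of m] obtain S where "finite S" "total_k_dominating 2 ({0..<4*m+6} \<times> {0..<4*m+7}) (cart_adj K_adj K_adj) S" "card S \<le> 6*m+10" by blast
    then show ?thesis unfolding n(2) unfolding n(1) by (intro exI[of _ S] conjI; (assumption | simp))
  next
    case 5
    define m where "m = (n - 3) div 4"
    have n: "n = 4*m+3" "n+1 = 4*m+4" using 5 assms unfolding m_def by presburger+
    from g34[of m] obtain S where "finite S" "total_k_dominating 2 ({0..<4*m+3} \<times> {0..<4*m+4}) (cart_adj K_adj K_adj) S" "card S \<le> 6*m+6" by blast
    then show ?thesis unfolding n(2) unfolding n(1) by (intro exI[of _ S] conjI; (assumption | simp))
  qed
qed

theorem theorem14:
  fixes n :: nat
  assumes "n \<ge> 2"
  shows "gamma_kt 2 (cart_verts (K_verts n) (K_verts (n+1))) (cart_adj K_adj K_adj) =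
           (if even n then (3*n+2) div 2 else (3*n+3) div 2)"
proof -
  let ?P = "\<lambda>c. \<exists>S. finite S \<and> total_k_dominating 2 ({0..<n} \<times> {0..<n+1}) (cart_adj K_adj K_adj) S \<and> card S = c"
  have g: "gamma_kt 2 (cart_verts (K_verts n) (K_verts (n+1))) (cart_adj K_adj K_adj) = (LEAST c. ?P c)"
    unfolding gamma_kt_def verts by simp
  obtain S0 where S0: "finite S0" "total_k_dominating 2 ({0..<n} \<times> {0..<n+1}) (cart_adj K_adj K_adj) S0"
    "2 * card S0 \<le> 3*n+3" using exists_upper[OF assms] by blast
  have P0: "?P (card S0)" using S0 by blast
  then have up: "(LEAST c. ?P c) \<le> card S0" by (rule Least_le)
  have "?P (LEAST c. ?P c)" using P0 by (rule LeastI)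
  then obtain S1 where S1: "finite S1" "total_k_dominating 2 ({0..<n} \<times> {0..<n+1}) (cart_adj K_adj K_adj) S1"
    "card S1 = (LEAST c. ?P c)" by blast
  have lo: "3*n+2 \<le> 2 * (LEAST c. ?P c)" using lower[OF assms S1(1,2)] S1(3) by simp
  show ?thesis unfolding g using up lo S0(3) by presburger
qed

end
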